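(* Let $A \in \mathbb{R}^{m \times n}$, $B \in \mathbb{R}^{n \times m}$, and $p := \min\{m,n\}$. Then there exist matrices $V \in \mathbb{R}^{m \times p}$ and $U \in \mathbb{R}^{n \times p}$ with orthonormal columns (i.e. $V^T V = U^T U = I_p$), and upper Hessenberg matrices $H \in \mathbb{R}^{p \times p}$ and $F \in \mathbb{R}^{p \times p}$ whose subdiagonal entries are all nonnegative, such that \[ V^T A U = H \quad\text{and}\quad U^T B V = F. \]
   Context: A square matrix $H=(h_{i,j})$ is upper Hessenberg if $h_{i,j}=0$ whenever $i > j+1$; its subdiagonal entries are $h_{j+1,j}$. *)

theory Defs
  imports "Jordan_Normal_Form.Matrix"
begin

definition upper_hessenberg :: "'a::zero mat \<Rightarrow> bool" where
  "upper_hessenberg H \<longleftrightarrow> square_mat H \<and>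
     (\<forall>i < dim_row H. \<forall>j < dim_col H. i > j + 1 \<longrightarrow> H $$ (i, j) = 0)"

definition nonneg_subdiag :: "'a::{zero,ord} mat \<Rightarrow> bool" where
  "nonneg_subdiag H \<longleftrightarrow> (\<forall>j. j + 1 < dim_row H \<longrightarrow> H $$ (j + 1, j) \<ge> 0)"

end

theory Submission
  imports Defs "Jordan_Normal_Form.Determinant"
begin

definition orthonormal :: "nat \<Rightarrow> real vec list \<Rightarrow> bool" where
  "orthonormal m vs \<longleftrightarrow> set vs \<subseteq> carrier_vec m \<and>
     (\<forall>i<length vs. \<forall>j<length vs. vs!i \<bullet> vs!j = (if i = j then 1 else 0))"

fun proj :: "nat \<Rightarrow> real vec list \<Rightarrow> real vec \<Rightarrow> real vec" where
  "proj m [] w = 0\<^sub>v m"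
| "proj m (v#vs) w = (v \<bullet> w) \<cdot>\<^sub>v v + proj m vs w"

lemma proj_carrier: "set vs \<subseteq> carrier_vec m \<Longrightarrow> proj m vs w \<in> carrier_vec m"
  by (induction vs) auto

lemma proj_orth:
  assumes "y \<in> carrier_vec m" "set vs \<subseteq> carrier_vec m" "\<forall>v\<in>set vs. y \<bullet> v = 0"
  shows "y \<bullet> proj m vs w = 0"
  using assms
proof (induction vs)
  case Nil then show ?case by simp
next
  case (Cons v vs)
  have pc: "proj m vs w \<in> carrier_vec m" using Cons.prems proj_carrier by auto
  have vc: "v \<in> carrier_vec m" using Cons.prems by auto
  have "y \<bullet> proj m (v#vs) w = y \<bullet> ((v \<bullet> w) \<cdot>\<^sub>v v) + y \<bullet> proj m vs w"
    using scalar_prod_add_distrib[OF Cons.prems(1) _ pc] vc by simp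
  also have "\<dots> = 0" using Cons vc by simp
  finally show ?case .
qed

lemma orthonormal_Cons:
  assumes "orthonormal m (v#vs)"
  shows "orthonormal m vs" "v \<bullet> v = 1" "\<forall>u\<in>set vs. v \<bullet> u = 0" "v \<in> carrier_vec m"
proof -
  show "orthonormal m vs"
  proof (unfold orthonormal_def, intro conjI allI impI)
    show "set vs \<subseteq> carrier_vec m" using assms unfolding orthonormal_def by auto
    fix i j assume "i < length vs" "j < length vs"
    then have "(v#vs)!(Suc i) \<bullet> (v#vs)!(Suc j) = (if Suc i = Suc j then 1 else 0)"
      using assms unfolding orthonormal_def by (metis Suc_less_eq length_Cons)
    then show "vs ! i \<bullet> vs ! j = (if i = j then 1 else 0)" by simp
  qed
  show "v \<bullet> v = 1" using assms unfolding orthonormal_def by force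
  show "\<forall>u\<in>set vs. v \<bullet> u = 0"
  proof
    fix u assume "u \<in> set vs"
    then obtain j where "j < length vs" "vs ! j = u" by (meson in_set_conv_nth)
    then show "v \<bullet> u = 0" using assms unfolding orthonormal_def
      by (metis Suc_less_eq length_Cons nat.simps(3) nth_Cons_0 nth_Cons_Suc zero_less_Suc)
  qed
  show "v \<in> carrier_vec m" using assms unfolding orthonormal_def by auto
qed

lemma proj_coef:
  assumes "orthonormal m vs" "i < length vs" "w \<in> carrier_vec m"
  shows "vs!i \<bullet> proj m vs w = vs!i \<bullet> w"
  using assms
proof (induction vs arbitrary: i)
  case Nil then show ?case by simp
next
  case (Cons v vs)
  note on = orthonormal_Cons[OF Cons.prems(1)]
  have sc: "set vs \<subseteq> carrier_vec m" using on(1) unfolding orthonormal_def by auto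
  have pc: "proj m vs w \<in> carrier_vec m" using sc proj_carrier by auto
  have vic: "(v#vs)!i \<in> carrier_vec m" using Cons.prems(2) on(4) sc
    by (metis nth_mem orthonormal_def Cons.prems(1) subsetD)
  have "(v#vs)!i \<bullet> proj m (v#vs) w = (v#vs)!i \<bullet> ((v \<bullet> w) \<cdot>\<^sub>v v) + (v#vs)!i \<bullet> proj m vs w"
    using scalar_prod_add_distrib[OF vic _ pc] on(4) by simp
  also have "\<dots> = (v#vs)!i \<bullet> w"
  proof (cases i)
    case 0
    have "v \<bullet> proj m vs w = 0"
      using proj_orth[OF on(4) sc] on(3) by simp
    then show ?thesis using 0 on by simp
  next
    case (Suc i')
    have ii: "i' < length vs" using Suc Cons.prems by simp
    have vi: "vs!i' \<in> carrier_vec m" using ii sc by auto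
    have "vs!i' \<bullet> v = 0" using on(3) ii comm_scalar_prod[OF vi on(4)]
      by (metis nth_mem)
    then show ?thesis using Suc Cons.IH[OF on(1) ii Cons.prems(3)] vi on(4) by simp
  qed
  finally show ?case .
qed

lemma self_prod_pos:
  assumes "(v::real vec) \<in> carrier_vec m" "v \<noteq> 0\<^sub>v m"
  shows "v \<bullet> v > 0"
proof -
  obtain i where i: "i < m" "v $ i \<noteq> 0"
    using assms by (metis eq_vecI carrier_vecD index_zero_vec(1) index_zero_vec(2))
  have "v \<bullet> v = (\<Sum>k\<in>{0..<m}. v$k * v$k)" using assms unfolding scalar_prod_def by auto
  also have "\<dots> > 0"
    by (rule sum_pos2[of _ i]) (use i in \<open>auto simp: zero_less_mult_iff\<close>)
  finally show ?thesis .
qed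

lemma exists_orth:
  assumes "orthonormal m vs" "length vs < m"
  shows "\<exists>z. z \<in> carrier_vec m \<and> z \<noteq> 0\<^sub>v m \<and> (\<forall>v\<in>set vs. z \<bullet> v = 0)"
proof -
  have sc: "set vs \<subseteq> carrier_vec m" using assms unfolding orthonormal_def by auto
  define c where "c = (\<lambda>i. if i < length vs then vs!i else 0\<^sub>v m)"
  define M where "M = mat\<^sub>r m m (\<lambda>i. if i = m - 1 then 0\<^sub>v m else c i)"
  have cc: "c \<in> {0..<m} \<rightarrow> carrier_vec m" using sc unfolding c_def by (auto simp: subset_iff)
  have "det M = 0" unfolding M_def by (rule det_row_0[OF _ cc]) (use assms in auto)
  moreover have Mc: "M \<in> carrier_mat m m" unfolding M_def by auto
  ultimately obtain z where z: "z \<in> carrier_vec m" "z \<noteq> 0\<^sub>v m" "M *\<^sub>v z = 0\<^sub>v m"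
    using det_0_iff_vec_prod_zero by blast
  have "\<forall>v\<in>set vs. z \<bullet> v = 0"
  proof
    fix v assume "v \<in> set vs"
    then obtain i where i: "i < length vs" "vs!i = v" by (meson in_set_conv_nth)
    have im: "i < m" "i \<noteq> m - 1" using i assms by auto
    have "(M *\<^sub>v z) $ i = row M i \<bullet> z" using Mc im by simp
    also have "row M i = v" unfolding M_def using im i c_def sc by (subst row_mat_of_row_fun) (auto simp: subset_iff)
    finally have "v \<bullet> z = 0" using z(3) im by simp
    then show "z \<bullet> v = 0" using comm_scalar_prod[OF z(1), of v] sc i nth_mem[OF i(1)] by auto
  qed
  then show ?thesis using z by blast
qed

lemma ext_step:
  assumes on: "orthonormal m vs" and len: "length vs < m" and w: "w \<in> carrier_vec m"
  shows "\<exists>x. x \<in> carrier_vec m \<and> x \<bullet> x = 1 \<and> (\<forall>v\<in>set vs. x \<bullet> v = 0) \<and> 0 \<le> x \<bullet> w \<and>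
     (\<forall>y\<in>carrier_vec m. (\<forall>v\<in>set vs. y \<bullet> v = 0) \<and> y \<bullet> x = 0 \<longrightarrow> y \<bullet> w = 0)" (is "?G")
proof -
  have sc: "set vs \<subseteq> carrier_vec m" using on unfolding orthonormal_def by auto
  define p where "p = proj m vs w"
  have pc: "p \<in> carrier_vec m" unfolding p_def using proj_carrier[OF sc] .
  define r where "r = w - p"
  have rc: "r \<in> carrier_vec m" unfolding r_def using w pc by simp
  have wrp: "w = r + p" unfolding r_def using w pc by auto
  have rorth: "\<forall>v\<in>set vs. r \<bullet> v = 0"
  proof
    fix v assume "v \<in> set vs"
    then obtain i where i: "i < length vs" "vs!i = v" by (meson in_set_conv_nth)
    have vc: "v \<in> carrier_vec m" using i sc nth_mem[OF i(1)] by auto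
    have "v \<bullet> r = v \<bullet> w - v \<bullet> p" unfolding r_def using scalar_prod_minus_distrib[OF vc w pc] .
    also have "\<dots> = 0" using proj_coef[OF on i(1) w] i unfolding p_def by simp
    finally show "r \<bullet> v = 0" using comm_scalar_prod[OF vc rc] by simp
  qed
  have key: "\<And>z. z \<in> carrier_vec m \<Longrightarrow> z \<noteq> 0\<^sub>v m \<Longrightarrow> (\<forall>v\<in>set vs. z \<bullet> v = 0) \<Longrightarrow>
      (\<exists>c. 0 \<le> c \<and> r = c \<cdot>\<^sub>v z) \<Longrightarrow> ?G"
  proof -
    fix z assume zc: "z \<in> carrier_vec m" and z0: "z \<noteq> 0\<^sub>v m" and zo: "\<forall>v\<in>set vs. z \<bullet> v = 0"
      and "\<exists>c. 0 \<le> c \<and> r = c \<cdot>\<^sub>v z"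
    then obtain c where c: "0 \<le> c" "r = c \<cdot>\<^sub>v z" by blast
    have zz: "z \<bullet> z > 0" using self_prod_pos[OF zc z0] .
    define s where "s = sqrt (z \<bullet> z)"
    have s0: "s > 0" unfolding s_def using zz by simp
    have ss: "s * s = z \<bullet> z" unfolding s_def using zz by simp
    define x where "x = (1 / s) \<cdot>\<^sub>v z"
    have xc: "x \<in> carrier_vec m" unfolding x_def using zc by simp
    have "x \<bullet> x = (1/s) * ((1/s) * (z \<bullet> z))" unfolding x_def using zc by simp
    also have "\<dots> = 1" unfolding ss[symmetric] using s0 by simp
    finally have xx: "x \<bullet> x = 1" .
    have xo: "\<forall>v\<in>set vs. x \<bullet> v = 0" unfolding x_def using zo zc sc by auto
    have xp: "x \<bullet> p = 0" unfolding p_def by (rule proj_orth[OF xc sc xo])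
    have rx: "r = (c * s) \<cdot>\<^sub>v x" unfolding x_def c(2) using s0 by (auto simp: smult_smult_assoc)
    have "x \<bullet> w = x \<bullet> r + x \<bullet> p" unfolding wrp using scalar_prod_add_distrib[OF xc rc pc] .
    also have "\<dots> = c * s" unfolding rx using xc xx xp by simp
    finally have xw: "x \<bullet> w = c * s" .
    show ?G
    proof (intro exI conjI ballI impI)
      show "x \<in> carrier_vec m" "x \<bullet> x = 1" using xc xx by auto
      show "\<And>v. v \<in> set vs \<Longrightarrow> x \<bullet> v = 0" using xo by auto
      show "0 \<le> x \<bullet> w" using xw c s0 by simp
      fix y assume yc: "y \<in> carrier_vec m" and yo: "(\<forall>v\<in>set vs. y \<bullet> v = 0) \<and> y \<bullet> x = 0"
      have yp: "y \<bullet> p = 0" unfolding p_def using proj_orth[OF yc sc] yo by auto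
      have "y \<bullet> w = y \<bullet> r + y \<bullet> p" unfolding wrp using scalar_prod_add_distrib[OF yc rc pc] .
      also have "\<dots> = 0" unfolding rx using yc xc yo yp by simp
      finally show "y \<bullet> w = 0" .
    qed
  qed
  show ?thesis
  proof (cases "r = 0\<^sub>v m")
    case True
    obtain z where z: "z \<in> carrier_vec m" "z \<noteq> 0\<^sub>v m" "\<forall>v\<in>set vs. z \<bullet> v = 0"
      using exists_orth[OF on len] by blast
    show ?thesis by (rule key[OF z]) (rule exI[of _ 0], use True z in auto)
  next
    case False
    show ?thesis by (rule key[OF rc False rorth]) (rule exI[of _ 1], use rc in auto)
  qed
qed


lemma orthonormal_snoc:
  assumes on: "orthonormal m vs" and xc: "x \<in> carrier_vec m" and xx: "x \<bullet> x = 1"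
    and xo: "\<forall>v\<in>set vs. x \<bullet> v = 0"
  shows "orthonormal m (vs @ [x])"
  unfolding orthonormal_def
proof (intro conjI allI impI)
  have sc: "set vs \<subseteq> carrier_vec m" using on unfolding orthonormal_def by auto
  then show "set (vs @ [x]) \<subseteq> carrier_vec m" using xc by auto
  fix i j assume i: "i < length (vs @ [x])" and j: "j < length (vs @ [x])"
  have ox: "\<And>l. l < length vs \<Longrightarrow> vs!l \<bullet> x = 0 \<and> x \<bullet> vs!l = 0"
    using xo sc xc comm_scalar_prod[OF xc] by (metis nth_mem subsetD)
  show "(vs @ [x]) ! i \<bullet> (vs @ [x]) ! j = (if i = j then 1 else 0)"
  proof (cases "i < length vs")
    case True
    then show ?thesis
    proof (cases "j < length vs")
      case True
      then show ?thesis using \<open>i < length vs\<close> on unfolding orthonormal_def by (simp add: nth_append)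
    next
      case False
      then have "j = length vs" using j by simp
      then show ?thesis using \<open>i < length vs\<close> ox by (simp add: nth_append)
    qed
  next
    case False
    then have ii: "i = length vs" using i by simp
    then show ?thesis
    proof (cases "j < length vs")
      case True
      then show ?thesis using ii ox by (simp add: nth_append)
    next
      case False
      then have "j = length vs" using j by simp
      then show ?thesis using ii xx by (simp add: nth_append)
    qed
  qed
qed

definition good :: "real mat \<Rightarrow> real mat \<Rightarrow> nat \<Rightarrow> nat \<Rightarrow> nat \<Rightarrow> real vec list \<Rightarrow> real vec list \<Rightarrow> bool" where
  "good A B m n k vs us \<longleftrightarrow> length vs = k \<and> length us = k \<and> orthonormal m vs \<and> orthonormal n us \<and>
   (\<forall>j. Suc j < k \<longrightarrow> (\<forall>y\<in>carrier_vec m. (\<forall>l\<le>Suc j. y \<bullet> vs!l = 0) \<longrightarrow> y \<bullet> (A *\<^sub>v us!j) = 0)) \<and>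
   (\<forall>j. Suc j < k \<longrightarrow> (\<forall>y\<in>carrier_vec n. (\<forall>l\<le>Suc j. y \<bullet> us!l = 0) \<longrightarrow> y \<bullet> (B *\<^sub>v vs!j) = 0)) \<and>
   (\<forall>j. Suc j < k \<longrightarrow> vs!Suc j \<bullet> (A *\<^sub>v us!j) \<ge> 0) \<and>
   (\<forall>j. Suc j < k \<longrightarrow> us!Suc j \<bullet> (B *\<^sub>v vs!j) \<ge> 0)"

lemma half_step:
  assumes A: "A \<in> carrier_mat m n"
    and on: "orthonormal m vs" and onu: "orthonormal n us" and lv: "length vs = k" and lu: "length us = k"
    and km: "k < m"
    and HA: "\<forall>j. Suc j < k \<longrightarrow> (\<forall>y\<in>carrier_vec m. (\<forall>l\<le>Suc j. y \<bullet> vs!l = 0) \<longrightarrow> y \<bullet> (A *\<^sub>v us!j) = 0)"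
    and SA: "\<forall>j. Suc j < k \<longrightarrow> vs!Suc j \<bullet> (A *\<^sub>v us!j) \<ge> 0"
  shows "\<exists>x. orthonormal m (vs @ [x]) \<and>
     (\<forall>j. Suc j < Suc k \<longrightarrow> (\<forall>y\<in>carrier_vec m. (\<forall>l\<le>Suc j. y \<bullet> (vs@[x])!l = 0) \<longrightarrow> y \<bullet> (A *\<^sub>v us!j) = 0)) \<and>
     (\<forall>j. Suc j < Suc k \<longrightarrow> (vs@[x])!Suc j \<bullet> (A *\<^sub>v us!j) \<ge> 0)"
proof -
  define w where "w = (if k = 0 then 0\<^sub>v m else A *\<^sub>v us!(k-1))"
  have wc: "w \<in> carrier_vec m" unfolding w_def using A by (auto intro!: carrier_vecI)
  obtain x where x: "x \<in> carrier_vec m" "x \<bullet> x = 1" "\<forall>v\<in>set vs. x \<bullet> v = 0" "0 \<le> x \<bullet> w"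
     "\<forall>y\<in>carrier_vec m. (\<forall>v\<in>set vs. y \<bullet> v = 0) \<and> y \<bullet> x = 0 \<longrightarrow> y \<bullet> w = 0"
    using ext_step[OF on _ wc] km lv by blast
  show ?thesis
  proof (intro exI conjI allI impI ballI)
    show "orthonormal m (vs @ [x])" by (rule orthonormal_snoc[OF on x(1-3)])
    fix j assume j: "Suc j < Suc k"
    show "(vs@[x])!Suc j \<bullet> (A *\<^sub>v us!j) \<ge> 0"
    proof (cases "Suc j < k")
      case True then show ?thesis using SA lv by (simp add: nth_append)
    next
      case False
      then have "Suc j = k" using j by simp
      then show ?thesis using x(4) lv unfolding w_def by (auto simp: nth_append)
    qed
    fix y assume yc: "y \<in> carrier_vec m" and yo: "\<forall>l\<le>Suc j. y \<bullet> (vs@[x])!l = 0"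
    show "y \<bullet> (A *\<^sub>v us!j) = 0"
    proof (cases "Suc j < k")
      case True
      have "\<forall>l\<le>Suc j. y \<bullet> vs!l = 0"
      proof (intro allI impI)
        fix l
        assume ll: "l \<le> Suc j"
        have "(vs@[x])!l = vs!l" using ll True lv by (simp add: nth_append)
        then show "y \<bullet> vs!l = 0" using yo ll by metis
      qed
      then show ?thesis using HA True yc by blast
    next
      case False
      then have jk: "Suc j = k" using j by simp
      have "\<forall>v\<in>set vs. y \<bullet> v = 0"
      proof
        fix v assume "v \<in> set vs"
        then obtain l where l: "l < length vs" "vs!l = v" by (meson in_set_conv_nth)
        have "(vs@[x])!l = vs!l" using l by (simp add: nth_append)
        moreover have "l \<le> Suc j" using l jk lv by simp
        ultimately show "y \<bullet> v = 0" using yo l by metis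
      qed
      moreover have "(vs@[x])!Suc j = x" using jk lv nth_append_length[of vs x] by simp
      moreover have "y \<bullet> x = 0" using yo calculation(2) by (metis le_refl)
      ultimately have "y \<bullet> w = 0" using x(5) yc by blast
      then show ?thesis using jk unfolding w_def by auto
    qed
  qed
qed

lemma build:
  assumes A: "A \<in> carrier_mat m n" and B: "B \<in> carrier_mat n m"
  shows "k \<le> min m n \<Longrightarrow> \<exists>vs us. good A B m n k vs us"
proof (induction k)
  case 0
  show ?case by (rule exI[of _ "[]"], rule exI[of _ "[]"]) (auto simp: good_def orthonormal_def)
next
  case (Suc k)
  then obtain vs us where g: "good A B m n k vs us" by auto
  note gd = g[unfolded good_def]
  obtain x where x: "orthonormal m (vs @ [x]) \<and>
     (\<forall>j. Suc j < Suc k \<longrightarrow> (\<forall>y\<in>carrier_vec m. (\<forall>l\<le>Suc j. y \<bullet> (vs@[x])!l = 0) \<longrightarrow> y \<bullet> (A *\<^sub>v us!j) = 0)) \<and>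
     (\<forall>j. Suc j < Suc k \<longrightarrow> (vs@[x])!Suc j \<bullet> (A *\<^sub>v us!j) \<ge> 0)"
    using half_step[OF A, of vs us k] gd Suc.prems by auto
  obtain z where z: "orthonormal n (us @ [z]) \<and>
     (\<forall>j. Suc j < Suc k \<longrightarrow> (\<forall>y\<in>carrier_vec n. (\<forall>l\<le>Suc j. y \<bullet> (us@[z])!l = 0) \<longrightarrow> y \<bullet> (B *\<^sub>v vs!j) = 0)) \<and>
     (\<forall>j. Suc j < Suc k \<longrightarrow> (us@[z])!Suc j \<bullet> (B *\<^sub>v vs!j) \<ge> 0)"
    using half_step[OF B, of us vs k] gd Suc.prems by auto
  have e1: "\<And>j. Suc j < Suc k \<Longrightarrow> (us@[z])!j = us!j" using gd by (simp add: nth_append)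
  have e2: "\<And>j. Suc j < Suc k \<Longrightarrow> (vs@[x])!j = vs!j" using gd by (simp add: nth_append)
  have "good A B m n (Suc k) (vs@[x]) (us@[z])"
    unfolding good_def using x z gd e1 e2 by simp
  then show ?case by blast
qed

lemma entry:
  assumes A: "A \<in> carrier_mat m n" and sv: "set vs \<subseteq> carrier_vec m" and su: "set us \<subseteq> carrier_vec n"
    and i: "i < length vs" and j: "j < length us"
  shows "(transpose_mat (mat_of_cols m vs) * A * mat_of_cols n us) $$ (i,j) = vs!i \<bullet> (A *\<^sub>v us!j)"
proof -
  have "transpose_mat (mat_of_cols m vs) * A * mat_of_cols n us
     = transpose_mat (mat_of_cols m vs) * (A * mat_of_cols n us)"
    by (rule assoc_mult_mat[OF _ A]) auto
  moreover have "(transpose_mat (mat_of_cols m vs) * (A * mat_of_cols n us)) $$ (i,j)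
     = vs!i \<bullet> (A *\<^sub>v us!j)"
    using i j A sv su col_mult2[OF A mat_of_cols_carrier(1)[of n us] j] nth_mem[OF j]
    by (subst index_mult_mat) (auto simp: subset_iff)
  ultimately show ?thesis by simp
qed

lemma gram:
  assumes on: "orthonormal m vs"
  shows "transpose_mat (mat_of_cols m vs) * mat_of_cols m vs = 1\<^sub>m (length vs)"
  using on unfolding orthonormal_def
  by (intro eq_matI) (auto simp: subset_iff)

lemma hess:
  assumes A: "A \<in> carrier_mat m n" and on: "orthonormal m vs" and onu: "orthonormal n us"
    and l: "length vs = k" "length us = k"
    and HA: "\<forall>j. Suc j < k \<longrightarrow> (\<forall>y\<in>carrier_vec m. (\<forall>l\<le>Suc j. y \<bullet> vs!l = 0) \<longrightarrow> y \<bullet> (A *\<^sub>v us!j) = 0)"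
    and SA: "\<forall>j. Suc j < k \<longrightarrow> vs!Suc j \<bullet> (A *\<^sub>v us!j) \<ge> 0"
  shows "upper_hessenberg (transpose_mat (mat_of_cols m vs) * A * mat_of_cols n us)"
    "nonneg_subdiag (transpose_mat (mat_of_cols m vs) * A * mat_of_cols n us)"
    "transpose_mat (mat_of_cols m vs) * A * mat_of_cols n us \<in> carrier_mat k k"
proof -
  have sv: "set vs \<subseteq> carrier_vec m" and su: "set us \<subseteq> carrier_vec n"
    using on onu unfolding orthonormal_def by auto
  show cm: "transpose_mat (mat_of_cols m vs) * A * mat_of_cols n us \<in> carrier_mat k k"
    unfolding carrier_mat_def using l by simp
  show "upper_hessenberg (transpose_mat (mat_of_cols m vs) * A * mat_of_cols n us)"
    unfolding upper_hessenberg_def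
  proof (intro conjI allI impI)
    show "square_mat (transpose_mat (mat_of_cols m vs) * A * mat_of_cols n us)" using cm l by auto
    fix i j assume i: "i < dim_row (transpose_mat (mat_of_cols m vs) * A * mat_of_cols n us)"
      and j: "j < dim_col (transpose_mat (mat_of_cols m vs) * A * mat_of_cols n us)"
      and ij: "j + 1 < i"
    have ik: "i < k" "j < k" using i j cm by auto
    have vi: "vs!i \<in> carrier_vec m" using sv ik l by auto
    have "\<forall>la\<le>Suc j. vs!i \<bullet> vs!la = 0" using on ik ij l unfolding orthonormal_def by auto
    then have "vs!i \<bullet> (A *\<^sub>v us!j) = 0" using HA ij ik vi by auto
    then show "(transpose_mat (mat_of_cols m vs) * A * mat_of_cols n us) $$ (i, j) = 0"
      using entry[OF A sv su] ik l by simp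
  qed
  show "nonneg_subdiag (transpose_mat (mat_of_cols m vs) * A * mat_of_cols n us)"
    unfolding nonneg_subdiag_def
  proof (intro allI impI)
    fix j assume "j + 1 < dim_row (transpose_mat (mat_of_cols m vs) * A * mat_of_cols n us)"
    then have jk: "Suc j < k" using cm by auto
    show "(transpose_mat (mat_of_cols m vs) * A * mat_of_cols n us) $$ (j + 1, j) \<ge> 0"
      using entry[OF A sv su, of "Suc j" j] jk l SA by simp
  qed
qed

theorem theorem2p1:
  fixes A B :: "real mat" and m n :: nat
  assumes "A \<in> carrier_mat m n" and "B \<in> carrier_mat n m"
  shows "\<exists>V U H F.
     V \<in> carrier_mat m (min m n) \<and> U \<in> carrier_mat n (min m n) \<and>
     H \<in> carrier_mat (min m n) (min m n) \<and> F \<in> carrier_mat (min m n) (min m n) \<and>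
     transpose_mat V * V = 1\<^sub>m (min m n) \<and> transpose_mat U * U = 1\<^sub>m (min m n) \<and>
     upper_hessenberg H \<and> upper_hessenberg F \<and>
     nonneg_subdiag H \<and> nonneg_subdiag F \<and>
     transpose_mat V * A * U = H \<and> transpose_mat U * B * V = F"
proof -
  obtain vs us where g: "good A B m n (min m n) vs us" using build[OF assms] by blast
  note gd = g[unfolded good_def]
  have h1: "upper_hessenberg (transpose_mat (mat_of_cols m vs) * A * mat_of_cols n us)"
    "nonneg_subdiag (transpose_mat (mat_of_cols m vs) * A * mat_of_cols n us)"
    "transpose_mat (mat_of_cols m vs) * A * mat_of_cols n us \<in> carrier_mat (min m n) (min m n)"
    using hess[OF assms(1), of vs us "min m n"] gd by auto
  have h2: "upper_hessenberg (transpose_mat (mat_of_cols n us) * B * mat_of_cols m vs)"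
    "nonneg_subdiag (transpose_mat (mat_of_cols n us) * B * mat_of_cols m vs)"
    "transpose_mat (mat_of_cols n us) * B * mat_of_cols m vs \<in> carrier_mat (min m n) (min m n)"
    using hess[OF assms(2), of us vs "min m n"] gd by auto
  show ?thesis
    apply (rule exI[of _ "mat_of_cols m vs"], rule exI[of _ "mat_of_cols n us"])
    using h1 h2 gram[of m vs] gram[of n us] gd mat_of_cols_carrier(1)[of m vs] mat_of_cols_carrier(1)[of n us]
    by auto
qed

end
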